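(* A subspace $\mathcal{U}$ of $\mathbb{R}^n$ is not realizable if and only if there is a diagonal $n\times n$ matrix $D$ with $\operatorname{tr}(D)>0$ and $v^TDv\le 0$ for all $v\in\mathcal{U}^\perp$.
   Context: A correlation matrix is a positive semidefinite matrix with all diagonal entries equal to $1$. A subspace $\mathcal{U}\subseteq\mathbb{R}^n$ is realizable if there is an $n\times n$ correlation matrix whose nullspace contains $\mathcal{U}$. *)

theory Defs
  imports "HOL-Analysis.Analysis"
begin

definition psd_matrix :: "real^'n^'n \<Rightarrow> bool" where
  "psd_matrix A \<longleftrightarrow> transpose A = A \<and> (\<forall>x. 0 \<le> x \<bullet> (A *v x))"

definition correlation_matrix :: "real^'n^'n \<Rightarrow> bool" where
  "correlation_matrix A \<longleftrightarrow> psd_matrix A \<and> (\<forall>i. A $ i $ i = 1)"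

definition null_space :: "real^'n^'n \<Rightarrow> (real^'n) set" where
  "null_space A = {x. A *v x = 0}"

definition realizable :: "(real^'n) set \<Rightarrow> bool" where
  "realizable U \<longleftrightarrow> (\<exists>C::real^'n^'n. correlation_matrix C \<and> U \<subseteq> null_space C)"

definition diagonal_matrix :: "real^'n^'n \<Rightarrow> bool" where
  "diagonal_matrix D \<longleftrightarrow> (\<forall>i j. i \<noteq> j \<longrightarrow> D $ i $ j = 0)"

end

theory Submission
  imports Defs
begin


lemma quad_sum: "x \<bullet> ((A::real^'n^'n) *v y) = (\<Sum>i\<in>UNIV. \<Sum>j\<in>UNIV. x$i * A$i$j * y$j)"
  by (simp add: inner_vec_def matrix_vector_mult_def sum_distrib_left mult.assoc)

lemma diag_quad: "diagonal_matrix D \<Longrightarrow> x \<bullet> (D *v x) = (\<Sum>i\<in>UNIV. D$i$i * (x$i)^2)"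
proof -
  assume d: "diagonal_matrix D"
  have e: "(\<Sum>j\<in>UNIV. x$i * D$i$j * x$j) = x$i * D$i$i * x$i" for i
  proof -
    have "(\<Sum>j\<in>UNIV-{i}. x$i * D$i$j * x$j) = 0"
      using d unfolding diagonal_matrix_def by (intro sum.neutral) auto
    then show ?thesis by (simp add: sum.remove[where x=i])
  qed
  have "x \<bullet> (D *v x) = (\<Sum>i\<in>UNIV. \<Sum>j\<in>UNIV. x$i * D$i$j * x$j)" by (rule quad_sum)
  also have "\<dots> = (\<Sum>i\<in>UNIV. x$i * D$i$i * x$i)" by (simp add: e)
  finally show ?thesis by (simp add: power2_eq_square mult_ac)
qed

lemma sym_iff: "transpose (C::real^'n^'n) = C \<longleftrightarrow> (\<forall>i j. C$i$j = C$j$i)"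
  by (auto simp: transpose_def vec_eq_iff)

lemma mv_axis: "((C::real^'n^'n) *v axis k 1)$i = C$i$k"
  by (simp add: matrix_vector_mult_def axis_def if_distrib cong: if_cong)

lemma sym_inner: "transpose (C::real^'n^'n) = C \<Longrightarrow> x \<bullet> (C *v y) = y \<bullet> (C *v x)"
  by (metis dot_lmul_matrix inner_commute vector_transpose_matrix)

lemma psd_expand:
  fixes C :: "real^'n^'n"
  assumes "transpose C = C"
  shows "(x + t *\<^sub>R y) \<bullet> (C *v (x + t *\<^sub>R y)) = x \<bullet> (C *v x) + 2 * t * (x \<bullet> (C *v y)) + t^2 * (y \<bullet> (C *v y))"
proof -
  have "y \<bullet> (C *v x) = x \<bullet> (C *v y)" using sym_inner[OF assms] by simp
  then show ?thesis
    by (simp add: matrix_vector_right_distrib matrix_vector_mult_scaleR inner_add_left inner_add_right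
        algebra_simps power2_eq_square)
qed

lemma psd_zero_diag:
  fixes C :: "real^'n^'n"
  assumes "psd_matrix C" "C$i$i = 0"
  shows "C$i$k = 0"
proof (rule ccontr)
  assume ne: "C$i$k \<noteq> 0"
  have s: "transpose C = C" and p: "\<And>x. 0 \<le> x \<bullet> (C *v x)" using assms(1) by (auto simp: psd_matrix_def)
  have cik: "axis k 1 \<bullet> (C *v axis i 1) = C$k$i" by (simp add: inner_axis' mv_axis)
  have cii: "axis i 1 \<bullet> (C *v axis i 1) = 0" using assms(2) by (simp add: inner_axis' mv_axis)
  define t where "t = - (axis k 1 \<bullet> (C *v axis k 1) + 1) / (2 * C$k$i)"
  have cki: "C$k$i \<noteq> 0" using ne s sym_iff by metis
  have "0 \<le> (axis k 1 + t *\<^sub>R axis i 1) \<bullet> (C *v (axis k 1 + t *\<^sub>R axis i 1))" by (rule p)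
  also have "\<dots> = axis k 1 \<bullet> (C *v axis k 1) + 2 * t * C$k$i"
    using psd_expand[OF s] cik cii by simp
  also have "\<dots> = -1" using cki unfolding t_def by (simp add: field_simps)
  finally show False by simp
qed

lemma easy_main:
  fixes W :: "(real^'n) set" and D :: "real^'n^'n"
  assumes W: "subspace W" and d: "diagonal_matrix D" and neg: "\<forall>w\<in>W. w \<bullet> (D *v w) \<le> 0"
  shows "psd_matrix C \<Longrightarrow> (\<forall>x. C *v x \<in> W) \<Longrightarrow> (\<Sum>i\<in>UNIV. D$i$i * C$i$i) \<le> 0"
proof (induction "card {i. C$i$i \<noteq> 0}" arbitrary: C rule: less_induct)
  case less
  show ?case
  proof (cases "\<exists>k. C$k$k \<noteq> 0")
    case False
    then show ?thesis by simp
  next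
    case True
    then obtain k where k: "C$k$k \<noteq> 0" by blast
    have s: "transpose C = C" and p: "\<And>x. 0 \<le> x \<bullet> (C *v x)" using less.prems(1) by (auto simp: psd_matrix_def)
    have sy: "\<And>i j. C$i$j = C$j$i" using s sym_iff by metis
    define a where "a = C$k$k"
    have "0 \<le> axis k 1 \<bullet> (C *v axis k 1)" by (rule p)
    then have "0 \<le> a" by (simp add: a_def inner_axis' mv_axis)
    with k have a: "0 < a" by (simp add: a_def)
    define c where "c = C *v axis k 1"
    have ci: "\<And>i. c$i = C$i$k" by (simp add: c_def mv_axis)
    have cW: "c \<in> W" using less.prems(2) c_def by auto
    define C' where "C' = (\<chi> i j. C$i$j - c$i * c$j / a)"
    have C'x: "C' *v x = C *v x - ((c \<bullet> x) / a) *\<^sub>R c" for x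
      by (simp add: vec_eq_iff C'_def matrix_vector_mult_def inner_vec_def sum_subtractf
          sum_distrib_left sum_divide_distrib algebra_simps)
    have xc: "x \<bullet> (C *v axis k 1) = c \<bullet> x" for x by (simp add: c_def inner_commute)
    have akk: "axis k 1 \<bullet> (C *v axis k 1) = a" by (simp add: a_def inner_axis' mv_axis)
    have psd': "psd_matrix C'"
      unfolding psd_matrix_def
    proof
      show "transpose C' = C'" unfolding sym_iff C'_def by (simp add: sy mult.commute)
      show "\<forall>x. 0 \<le> x \<bullet> (C' *v x)"
      proof
        fix x
        have "0 \<le> (x + (- (c \<bullet> x) / a) *\<^sub>R axis k 1) \<bullet> (C *v (x + (- (c \<bullet> x) / a) *\<^sub>R axis k 1))"
          by (rule p)
        also have "\<dots> = x \<bullet> (C *v x) + 2 * (- (c \<bullet> x) / a) * (x \<bullet> (C *v axis k 1)) + (- (c \<bullet> x) / a)^2 * (axis k 1 \<bullet> (C *v axis k 1))"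
          by (rule psd_expand[OF s])
        also have "\<dots> = x \<bullet> (C *v x) - (c \<bullet> x)^2 / a"
          using a unfolding akk xc by (simp add: power2_eq_square field_simps inner_axis ci a_def)
        also have "\<dots> = x \<bullet> (C' *v x)"
          by (simp add: C'x inner_diff_right power2_eq_square inner_commute)
        finally show "0 \<le> x \<bullet> (C' *v x)" .
      qed
    qed
    have rng: "\<forall>x. C' *v x \<in> W"
      using less.prems(2) cW W by (simp add: C'x subspace_diff subspace_scale)
    have sub: "{i. C'$i$i \<noteq> 0} \<subseteq> {i. C$i$i \<noteq> 0} - {k}"
    proof
      fix i assume "i \<in> {i. C'$i$i \<noteq> 0}"
      then have ne: "C'$i$i \<noteq> 0" by simp
      have "i \<noteq> k" using ne a by (auto simp: C'_def ci a_def)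
      moreover have "C$i$i \<noteq> 0"
      proof
        assume "C$i$i = 0"
        then have "C$i$k = 0" using psd_zero_diag less.prems(1) by blast
        then show False using ne \<open>C$i$i = 0\<close> by (simp add: C'_def ci)
      qed
      ultimately show "i \<in> {i. C$i$i \<noteq> 0} - {k}" by simp
    qed
    have "card {i. C'$i$i \<noteq> 0} \<le> card ({i. C$i$i \<noteq> 0} - {k})"
      by (rule card_mono[OF _ sub]) simp
    also have "\<dots> < card {i. C$i$i \<noteq> 0}"
      using k by (intro card_Diff1_less) auto
    finally have IH: "(\<Sum>i\<in>UNIV. D$i$i * C'$i$i) \<le> 0"
      using less.hyps psd' rng by blast
    have cD: "(\<Sum>i\<in>UNIV. D$i$i * (c$i)^2) \<le> 0"
      using neg cW diag_quad[OF d, of c] by metis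
    have "(\<Sum>i\<in>UNIV. D$i$i * C$i$i) = (\<Sum>i\<in>UNIV. D$i$i * C'$i$i) + (\<Sum>i\<in>UNIV. D$i$i * (c$i)^2) / a"
      by (simp add: C'_def sum_divide_distrib sum.distrib[symmetric] algebra_simps power2_eq_square)
    also have "\<dots> \<le> 0" using IH cD a by (simp add: add_nonpos_nonpos divide_nonpos_pos)
    finally show ?thesis .
  qed
qed

lemma sumsq_norm: "(\<Sum>i\<in>UNIV. ((v::real^'n)$i)^2) = (norm v)^2"
  unfolding power2_norm_eq_inner inner_vec_def by (simp add: power2_eq_square)

lemma realize_lemma:
  fixes U :: "(real^'n) set" and v :: "'a \<Rightarrow> real^'n"
  assumes F: "finite F" and vW: "\<forall>g\<in>F. v g \<in> orthogonal_comp U" and u: "\<forall>g\<in>F. 0 \<le> u g"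
    and one: "\<forall>i. (\<Sum>g\<in>F. u g * (v g$i)^2) = 1"
  shows "realizable U"
proof -
  define C :: "real^'n^'n" where "C = (\<chi> i j. \<Sum>g\<in>F. u g * (v g$i) * (v g$j))"
  have q: "x \<bullet> (C *v x) = (\<Sum>g\<in>F. u g * (v g \<bullet> x)^2)" for x
  proof -
    have "x \<bullet> (C *v x) = (\<Sum>i\<in>UNIV. \<Sum>j\<in>UNIV. x$i * C$i$j * x$j)" by (rule quad_sum)
    also have "\<dots> = (\<Sum>i\<in>UNIV. \<Sum>j\<in>UNIV. \<Sum>g\<in>F. u g * ((v g$i) * x$i) * ((v g$j) * x$j))"
      by (simp add: C_def sum_distrib_left sum_distrib_right mult_ac)
    also have "\<dots> = (\<Sum>g\<in>F. \<Sum>i\<in>UNIV. \<Sum>j\<in>UNIV. u g * ((v g$i) * x$i) * ((v g$j) * x$j))"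
      by (subst sum.swap, rule sum.cong[OF refl], rule sum.swap)
    also have "\<dots> = (\<Sum>g\<in>F. u g * (v g \<bullet> x)^2)"
      by (simp add: inner_vec_def power2_eq_square sum_product sum_distrib_left mult_ac)
    finally show ?thesis .
  qed
  have "correlation_matrix C"
    unfolding correlation_matrix_def psd_matrix_def
  proof (intro conjI allI)
    show "transpose C = C" unfolding sym_iff C_def by (simp add: mult_ac)
    show "0 \<le> x \<bullet> (C *v x)" for x unfolding q using u by (intro sum_nonneg) auto
    show "C$i$i = 1" for i using one by (simp add: C_def power2_eq_square mult.assoc)
  qed
  moreover have "U \<subseteq> null_space C"
  proof
    fix x assume x: "x \<in> U"
    have z: "\<And>g. g \<in> F \<Longrightarrow> v g \<bullet> x = 0"
      using vW x by (auto simp: orthogonal_comp_def orthogonal_def inner_commute)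
    have "C *v x = 0"
    proof (rule vec_eq_iff[THEN iffD2], rule allI)
      fix i
      have "(C *v x)$i = (\<Sum>j\<in>UNIV. \<Sum>g\<in>F. u g * (v g$i) * ((v g$j) * x$j))"
        by (simp add: C_def matrix_vector_mult_def sum_distrib_right sum_distrib_left mult_ac)
      also have "\<dots> = (\<Sum>g\<in>F. \<Sum>j\<in>UNIV. u g * (v g$i) * ((v g$j) * x$j))"
        by (rule sum.swap)
      also have "\<dots> = (\<Sum>g\<in>F. u g * (v g$i) * (v g \<bullet> x))"
        by (simp add: inner_vec_def sum_distrib_left)
      also have "\<dots> = 0" using z by simp
      finally show "(C *v x)$i = 0$i" by simp
    qed
    then show "x \<in> null_space C" by (simp add: null_space_def)
  qed
  ultimately show ?thesis unfolding realizable_def by blast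
qed

lemma dir_easy:
  fixes U :: "(real^'n) set"
  assumes "diagonal_matrix D" "trace D > 0" "\<forall>v \<in> orthogonal_comp U. v \<bullet> (D *v v) \<le> 0"
  shows "\<not> realizable U"
proof
  assume "realizable U"
  then obtain C :: "real^'n^'n" where C: "correlation_matrix C" "U \<subseteq> null_space C"
    unfolding realizable_def by blast
  have psd: "psd_matrix C" and s: "transpose C = C" and one: "\<And>i. C$i$i = 1"
    using C(1) by (auto simp: correlation_matrix_def psd_matrix_def)
  have "C *v x \<in> orthogonal_comp U" for x
  proof -
    have "y \<bullet> (C *v x) = 0" if y: "y \<in> U" for y
    proof -
      have "C *v y = 0" using C(2) y unfolding null_space_def by blast
      then show ?thesis using sym_inner[OF s, of y x] by simp
    qed
    then show ?thesis by (auto simp: orthogonal_comp_def orthogonal_def)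
  qed
  then have "(\<Sum>i\<in>UNIV. D$i$i * C$i$i) \<le> 0"
    using easy_main[OF subspace_orthogonal_comp assms(1) assms(3) psd] by blast
  then have "trace D \<le> 0" by (simp add: one trace_def)
  with assms(2) show False by simp
qed

lemma dir_hard:
  fixes U :: "(real^'n) set"
  assumes nr: "\<not> realizable U"
  shows "\<exists>D::real^'n^'n. diagonal_matrix D \<and> trace D > 0 \<and> (\<forall>v\<in>orthogonal_comp U. v \<bullet> (D *v v) \<le> 0)"
proof -
  define W where "W = orthogonal_comp U"
  define sq where "sq = (\<lambda>v::real^'n. \<chi> i. (v$i)^2)"
  define G where "G = sq ` (W \<inter> sphere 0 1)"
  have sW: "subspace W" unfolding W_def by (rule subspace_orthogonal_comp)
  have sumG: "(\<Sum>i\<in>UNIV. g$i) = 1" if "g \<in> G" for g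
    using that by (auto simp: G_def sq_def sumsq_norm)
  have normalize: "(1 / norm v) *\<^sub>R v \<in> W \<inter> sphere 0 1" if "v \<in> W" "v \<noteq> 0" for v
    using that sW by (simp add: subspace_scale)
  have sqscale: "sq v = (norm v)^2 *\<^sub>R sq ((1 / norm v) *\<^sub>R v)" if "v \<noteq> 0" for v
    using that by (simp add: sq_def vec_eq_iff power2_eq_square field_simps)
  show ?thesis
  proof (cases "G = {}")
    case True
    have W0: "v = 0" if "v \<in> W" for v
      using normalize[OF that] True by (auto simp: G_def)
    show ?thesis
    proof (intro exI conjI)
      show "diagonal_matrix (mat 1 :: real^'n^'n)" by (simp add: diagonal_matrix_def mat_def)
      show "trace (mat 1 :: real^'n^'n) > 0" by (simp add: trace_I)
      show "\<forall>v\<in>orthogonal_comp U. v \<bullet> (mat 1 *v v) \<le> 0"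
      proof
        fix v assume "v \<in> orthogonal_comp U"
        then have "v = 0" using W0 unfolding W_def by blast
        then show "v \<bullet> (mat 1 *v v) \<le> 0" by simp
      qed
    qed
  next
    case False
    define S where "S = convex hull G"
    define T where "T = {x::real^'n. (\<forall>i j. x$i = x$j) \<and> (\<forall>i. 0 \<le> x$i)}"
    have cG: "compact G" unfolding G_def
    proof (rule compact_continuous_image)
      show "continuous_on (W \<inter> sphere 0 1) sq" unfolding sq_def
        by (intro continuous_intros)
      show "compact (W \<inter> sphere 0 1)" by (intro closed_Int_compact closed_subspace sW compact_sphere)
    qed
    have cS: "compact S" "convex S" "S \<noteq> {}" using cG False by (auto simp: S_def compact_convex_hull)
    have clT: "closed T"
    proof -
      have "T = (\<Inter>i. \<Inter>j. {x::real^'n. x$i = x$j}) \<inter> (\<Inter>i. {x::real^'n. 0 \<le> x$i})"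
        unfolding T_def by blast
      moreover have "closed {x::real^'n. x$i = x$j}" for i j
        by (intro closed_Collect_eq continuous_on_component continuous_on_id)
      moreover have "closed {x::real^'n. 0 \<le> x$i}" for i
        by (intro closed_Collect_le continuous_on_component continuous_on_id continuous_on_const)
      ultimately show ?thesis by (simp add: closed_Int closed_INT)
    qed
    have cvT: "convex T" unfolding T_def convex_def
      by (auto intro!: add_nonneg_nonneg mult_nonneg_nonneg) metis+
    define one :: "real^'n" where "one = (\<chi> i. 1)"
    have disj: "S \<inter> T = {}"
    proof (rule ccontr)
      assume "S \<inter> T \<noteq> {}"
      then obtain y where yS: "y \<in> S" and yT: "y \<in> T" by blast
      obtain F u where F: "finite F" "F \<subseteq> G" "\<forall>x\<in>F. 0 \<le> u x" "sum u F = 1"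
        and yF: "(\<Sum>g\<in>F. u g *\<^sub>R g) = y"
        using yS unfolding S_def convex_hull_explicit by blast
      have "\<forall>g\<in>F. \<exists>v. v \<in> W \<inter> sphere 0 1 \<and> g = sq v" using F(2) unfolding G_def by blast
      then obtain vv where vv: "\<forall>g\<in>F. vv g \<in> W \<inter> sphere 0 1 \<and> g = sq (vv g)"
        by metis
      have yi: "y$i = (\<Sum>g\<in>F. u g * g$i)" for i using yF by auto
      have "(\<Sum>i\<in>UNIV. y$i) = (\<Sum>g\<in>F. u g * (\<Sum>i\<in>UNIV. g$i))"
        unfolding yi sum_distrib_left by (rule sum.swap)
      also have "\<dots> = 1" using F(2,4) sumG by (simp add: subset_iff)
      finally have sy: "(\<Sum>i\<in>UNIV. y$i) = 1" .
      define t where "t = y $ (undefined::'n)"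
      have yt: "y$i = t" for i using yT by (simp add: T_def t_def)
      with sy have "real CARD('n) * t = 1" by simp
      moreover have "t \<ge> 0" using yT by (simp add: T_def t_def)
      ultimately have tpos: "t > 0" by (cases "t = 0") auto
      have "realizable U"
      proof (rule realize_lemma[OF F(1), of vv _ "\<lambda>g. u g / t"])
        show "\<forall>g\<in>F. vv g \<in> orthogonal_comp U" using vv W_def by auto
        show "\<forall>g\<in>F. 0 \<le> u g / t" using F(3) tpos by auto
        show "\<forall>i. (\<Sum>g\<in>F. u g / t * (vv g $ i)\<^sup>2) = 1"
        proof
          fix i
          have "(\<Sum>g\<in>F. u g / t * (vv g $ i)\<^sup>2) = (\<Sum>g\<in>F. u g * g$i / t)"
          proof (rule sum.cong[OF refl])
            fix g assume "g \<in> F"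
            then have "g = sq (vv g)" using vv by blast
            moreover have "sq (vv g) $ i = (vv g $ i)\<^sup>2" by (simp add: sq_def)
            ultimately have "g $ i = (vv g $ i)\<^sup>2" by metis
            then show "u g / t * (vv g $ i)\<^sup>2 = u g * g$i / t" by simp
          qed
          also have "\<dots> = (\<Sum>g\<in>F. u g * g$i) / t" by (simp add: sum_divide_distrib)
          also have "\<dots> = 1" using yi[of i] yt[of i] tpos by simp
          finally show "(\<Sum>g\<in>F. u g / t * (vv g $ i)\<^sup>2) = 1" .
        qed
      qed
      with nr show False by simp
    qed
    obtain a b where ab: "\<forall>x\<in>S. a \<bullet> x < b" "\<forall>x\<in>T. b < a \<bullet> x"
      using separating_hyperplane_compact_closed[OF cS(2) cS(1) cS(3) cvT clT disj] by blast
    have "0 \<in> T" by (simp add: T_def)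
    then have "b < a \<bullet> 0" using ab(2) by blast
    then have b: "b < 0" by simp
    have sT: "s *\<^sub>R one \<in> T" if "0 \<le> s" for s using that by (simp add: T_def one_def)
    have a1: "0 \<le> a \<bullet> one"
    proof (rule ccontr)
      assume "\<not> 0 \<le> a \<bullet> one"
      then have neg: "a \<bullet> one < 0" by simp
      have "0 \<le> b / (a \<bullet> one)" using neg b by (simp add: divide_nonpos_neg)
      then have "b < a \<bullet> ((b / (a \<bullet> one)) *\<^sub>R one)"
        using ab(2) sT[of "b / (a \<bullet> one)"] by blast
      then show False using neg by simp
    qed
    define D :: "real^'n^'n" where "D = (\<chi> i j. if i = j then a$i - b else 0)"
    have dD: "diagonal_matrix D" by (simp add: D_def diagonal_matrix_def)
    show ?thesis
    proof (intro exI conjI)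
      show "diagonal_matrix D" by (rule dD)
      have "trace D = a \<bullet> one - real CARD('n) * b"
        unfolding trace_def D_def one_def inner_vec_def by (simp add: sum_subtractf)
      moreover have "real CARD('n) * b < 0" using b by (simp add: mult_pos_neg)
      ultimately show "trace D > 0" using a1 by linarith
      show "\<forall>v\<in>orthogonal_comp U. v \<bullet> (D *v v) \<le> 0"
      proof
        fix v assume vU: "v \<in> orthogonal_comp U"
        show "v \<bullet> (D *v v) \<le> 0"
        proof (cases "v = 0")
          case True then show ?thesis by simp
        next
          case False
          define w where "w = (1 / norm v) *\<^sub>R v"
          have "w \<in> W \<inter> sphere 0 1" using normalize[OF vU[folded W_def] False] unfolding w_def .
          then have "sq w \<in> G" unfolding G_def by (rule imageI)
          then have "sq w \<in> S" unfolding S_def by (rule hull_inc)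
          then have aw: "a \<bullet> sq w < b" using ab(1) by blast
          have "v \<bullet> (D *v v) = (\<Sum>i\<in>UNIV. (a$i - b) * (v$i)^2)"
            unfolding diag_quad[OF dD] by (simp add: D_def)
          also have "\<dots> = a \<bullet> sq v - b * (norm v)^2"
          proof -
            have "(\<Sum>i\<in>UNIV. (a$i - b) * (v$i)^2) = (\<Sum>i\<in>UNIV. a$i * (v$i)^2) - b * (\<Sum>i\<in>UNIV. (v$i)^2)"
              by (simp add: left_diff_distrib sum_subtractf sum_distrib_left)
            moreover have "a \<bullet> sq v = (\<Sum>i\<in>UNIV. a$i * (v$i)^2)"
              unfolding sq_def inner_vec_def by simp
            ultimately show ?thesis by (simp only: sumsq_norm)
          qed
          also have "\<dots> = (norm v)^2 * (a \<bullet> sq w - b)"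
          proof -
            have "sq v = (norm v)^2 *\<^sub>R sq w" using sqscale[OF False] unfolding w_def .
            then have "a \<bullet> sq v = (norm v)^2 * (a \<bullet> sq w)" by simp
            then show ?thesis by (simp add: algebra_simps)
          qed
          also have "\<dots> \<le> 0" using aw by (simp add: mult_nonneg_nonpos)
          finally show ?thesis .
        qed
      qed
    qed
  qed
qed


theorem lemma3p2:
  fixes U :: "(real^'n) set"
  assumes "subspace U"
  shows "\<not> realizable U \<longleftrightarrow>
    (\<exists>D::real^'n^'n. diagonal_matrix D \<and> trace D > 0 \<and>
       (\<forall>v \<in> orthogonal_comp U. v \<bullet> (D *v v) \<le> 0))"
  using dir_easy dir_hard by blast

end
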